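(* Let $I$ be a composition of $n$. For every $1\le i\le n-1$ and every $D\subseteq\{1,\dots,n\}$, $$T_i\,c_D\epsilon_I=\alpha(i,I,D)\,c_D\epsilon_I+\sum_{D'<_I D}\beta_{D'}\,c_{D'}\epsilon_I$$ for some scalars $\beta_{D'}$. Here $\alpha(i,I,D)\in\{0,-1\}$, and $\alpha(i,I,D)=-1$ exactly when either ($i+1\in D$ and $i\notin\operatorname{Des}(I)$) or ($i\notin D$ and $i\in\operatorname{Des}(I)$).
   Context: For a composition $I=(i_1,\dots,i_r)$ of $n$, $\operatorname{Des}(I)=\{i_1,i_1+i_2,\dots,i_1+\cdots+i_{r-1}\}\subseteq[1,n-1]$. $H_n(0)$ is the complex algebra generated by $T_1,\dots,T_{n-1}$ with $T_i^2=-T_i$, $T_iT_j=T_jT_i$ ($|i-j|>1$), and $T_iT_{i+1}T_i=T_{i+1}T_iT_{i+1}$. $Cl_n$ is generated by $c_1,\dots,c_n$ with $c_ic_j=-c_jc_i$ ($i\ne j$) and $c_i^2=-1$; for $D=\{d_1<\dots<d_k\}$, $c_D=c_{d_1}\cdots c_{d_k}$. $HCl_n(0)$ is the complex algebra generated by the $T_i$ and the $c_j$, with these relations together with $T_ic_j=c_jT_i$ ($j\ne i,i+1$), $T_ic_i=c_{i+1}T_i$, and $(T_i+1)c_{i+1}=c_i(T_i+1)$. $S_I=\mathbb{C}\epsilon_I$ is the one-dimensional $H_n(0)$-module with $T_j\epsilon_I=-\epsilon_I$ if $j\in\operatorname{Des}(I)$ and $T_j\epsilon_I=0$ otherwise.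 $M_I=HCl_n(0)\otimes_{H_n(0)}S_I$, which has basis $(c_D\epsilon_I)_{D\subseteq\{1,\dots,n\}}$. The partial order $\le_I$ on subsets of $\{1,\dots,n\}$ is the reflexive–transitive closure of the relations $D'\lessdot D$, which hold when, for some $1\le i\le n-1$, one of the following is true: (a) $i\notin\operatorname{Des}(I)$, $i\notin D$, $i+1\in D$, and $D'=(D\setminus\{i+1\})\cup\{i\}$; (b) $i\notin\operatorname{Des}(I)$, $i,i+1\in D$, and $D'=D\setminus\{i,i+1\}$; (c) $i\in\operatorname{Des}(I)$, $i\in D$, $i+1\notin D$, and $D'=(D\setminus\{i\})\cup\{i+1\}$; (d) $i\in\operatorname{Des}(I)$, $i,i+1\in D$, and $D'=D\setminus\{i,i+1\}$. We write $D'<_ID$ for $D'\le_ID$ with $D'\ne D$. *)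

theory Defs
  imports Complex_Main
begin

text \<open>Generators of the free algebra: T i (0-Hecke generators) and C j (Clifford generators).\<close>
datatype gen = T nat | C nat

type_synonym word = "gen list"
text \<open>Elements of the free associative algebra over the complex numbers: coefficient functions on words.\<close>
type_synonym elem = "word \<Rightarrow> complex"

definition wd :: "word \<Rightarrow> elem" where
  "wd w = (\<lambda>v. if v = w then 1 else 0)"

definition padd :: "elem \<Rightarrow> elem \<Rightarrow> elem" where
  "padd f g = (\<lambda>w. f w + g w)"

definition psub :: "elem \<Rightarrow> elem \<Rightarrow> elem" where
  "psub f g = (\<lambda>w. f w - g w)"

definition psmult :: "complex \<Rightarrow> elem \<Rightarrow> elem" where
  "psmult a f = (\<lambda>w. a * f w)"

definition lmul :: "gen \<Rightarrow> elem \<Rightarrow> elem" where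
  "lmul g f = (\<lambda>x. case x of [] \<Rightarrow> 0 | h # y \<Rightarrow> (if h = g then f y else 0))"

definition rmul :: "elem \<Rightarrow> gen \<Rightarrow> elem" where
  "rmul f g = (\<lambda>x. if x \<noteq> [] \<and> last x = g then f (butlast x) else 0)"

definition valid_gen :: "nat \<Rightarrow> gen \<Rightarrow> bool" where
  "valid_gen n g = (case g of T i \<Rightarrow> 1 \<le> i \<and> i < n | C j \<Rightarrow> 1 \<le> j \<and> j \<le> n)"

definition is_composition :: "nat list \<Rightarrow> nat \<Rightarrow> bool" where
  "is_composition I n \<longleftrightarrow> (\<forall>p\<in>set I. 0 < p) \<and> sum_list I = n"

definition des :: "nat list \<Rightarrow> nat set" where
  "des I = {sum_list (take k I) | k. 1 \<le> k \<and> k < length I}"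

text \<open>Defining relators of HCl_n(0) (each relation written as "lhs - rhs").\<close>
definition hcl_relators :: "nat \<Rightarrow> elem set" where
  "hcl_relators n =
     {padd (wd [T i, T i]) (wd [T i]) | i. 1 \<le> i \<and> i < n}
   \<union> {psub (wd [T i, T j]) (wd [T j, T i]) | i j.
        1 \<le> i \<and> i < n \<and> 1 \<le> j \<and> j < n \<and> (i + 1 < j \<or> j + 1 < i)}
   \<union> {psub (wd [T i, T (i+1), T i]) (wd [T (i+1), T i, T (i+1)]) | i. 1 \<le> i \<and> i + 1 < n}
   \<union> {padd (wd [C i, C j]) (wd [C j, C i]) | i j.
        1 \<le> i \<and> i \<le> n \<and> 1 \<le> j \<and> j \<le> n \<and> i \<noteq> j}
   \<union> {padd (wd [C i, C i]) (wd []) | i. 1 \<le> i \<and> i \<le> n}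
   \<union> {psub (wd [T i, C j]) (wd [C j, T i]) | i j.
        1 \<le> i \<and> i < n \<and> 1 \<le> j \<and> j \<le> n \<and> j \<noteq> i \<and> j \<noteq> i + 1}
   \<union> {psub (wd [T i, C i]) (wd [C (i+1), T i]) | i. 1 \<le> i \<and> i < n}
   \<union> {psub (padd (wd [T i, C (i+1)]) (wd [C (i+1)])) (padd (wd [C i, T i]) (wd [C i])) | i.
        1 \<le> i \<and> i < n}"

text \<open>Two-sided ideal of the free algebra generated by the relators: HCl_n(0) = F / hcl_ideal n.\<close>
inductive_set hcl_ideal :: "nat \<Rightarrow> elem set" for n where
  rel: "r \<in> hcl_relators n \<Longrightarrow> r \<in> hcl_ideal n"
| zero: "(\<lambda>_. 0) \<in> hcl_ideal n"
| add: "f \<in> hcl_ideal n \<Longrightarrow> g \<in> hcl_ideal n \<Longrightarrow> padd f g \<in> hcl_ideal n"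
| smult: "f \<in> hcl_ideal n \<Longrightarrow> psmult a f \<in> hcl_ideal n"
| lmul: "valid_gen n g \<Longrightarrow> f \<in> hcl_ideal n \<Longrightarrow> lmul g f \<in> hcl_ideal n"
| rmul: "valid_gen n g \<Longrightarrow> f \<in> hcl_ideal n \<Longrightarrow> rmul f g \<in> hcl_ideal n"

text \<open>Annihilating relations of epsilon_I in S_I: T_j + 1 (j in Des I), T_j (j not in Des I).\<close>
definition S_relators :: "nat \<Rightarrow> nat list \<Rightarrow> elem set" where
  "S_relators n I = {(if j \<in> des I then padd (wd [T j]) (wd []) else wd [T j]) | j. 1 \<le> j \<and> j < n}"

text \<open>M_I = HCl_n(0) \<otimes>_{H_n(0)} S_I = F / (hcl_ideal n + F * S_relators n I);
  M_kernel n I is the kernel of the quotient map F \<rightarrow> M_I, f \<mapsto> f \<cdot> epsilon_I.\<close>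
inductive_set M_kernel :: "nat \<Rightarrow> nat list \<Rightarrow> elem set" for n I where
  ideal: "f \<in> hcl_ideal n \<Longrightarrow> f \<in> M_kernel n I"
| srel: "k \<in> S_relators n I \<Longrightarrow> k \<in> M_kernel n I"
| add: "f \<in> M_kernel n I \<Longrightarrow> g \<in> M_kernel n I \<Longrightarrow> padd f g \<in> M_kernel n I"
| smult: "f \<in> M_kernel n I \<Longrightarrow> psmult a f \<in> M_kernel n I"
| lmul: "valid_gen n g \<Longrightarrow> f \<in> M_kernel n I \<Longrightarrow> lmul g f \<in> M_kernel n I"

text \<open>Equality of f \<cdot> epsilon_I and g \<cdot> epsilon_I in M_I.\<close>
definition M_eq :: "nat \<Rightarrow> nat list \<Rightarrow> elem \<Rightarrow> elem \<Rightarrow> bool" where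
  "M_eq n I f g \<longleftrightarrow> psub f g \<in> M_kernel n I"

definition cword :: "nat set \<Rightarrow> word" where
  "cword D = map C (sorted_list_of_set D)"

definition cov :: "nat \<Rightarrow> nat list \<Rightarrow> nat set \<Rightarrow> nat set \<Rightarrow> bool" where
  "cov n I D' D \<longleftrightarrow> (\<exists>i. 1 \<le> i \<and> i \<le> n - 1 \<and>
     ((i \<notin> des I \<and> i \<notin> D \<and> i + 1 \<in> D \<and> D' = insert i (D - {i + 1}))
    \<or> (i \<notin> des I \<and> i \<in> D \<and> i + 1 \<in> D \<and> D' = D - {i, i + 1})
    \<or> (i \<in> des I \<and> i \<in> D \<and> i + 1 \<notin> D \<and> D' = insert (i + 1) (D - {i}))
    \<or> (i \<in> des I \<and> i \<in> D \<and> i + 1 \<in> D \<and> D' = D - {i, i + 1})))"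

definition le_I :: "nat \<Rightarrow> nat list \<Rightarrow> nat set \<Rightarrow> nat set \<Rightarrow> bool" where
  "le_I n I = (cov n I)\<^sup>*\<^sup>*"

definition lt_I :: "nat \<Rightarrow> nat list \<Rightarrow> nat set \<Rightarrow> nat set \<Rightarrow> bool" where
  "lt_I n I D' D \<longleftrightarrow> le_I n I D' D \<and> D' \<noteq> D"

definition alpha :: "nat \<Rightarrow> nat list \<Rightarrow> nat set \<Rightarrow> complex" where
  "alpha i I D = (if (i + 1 \<in> D \<and> i \<notin> des I) \<or> (i \<notin> D \<and> i \<in> des I) then -1 else 0)"

end

theory Submission
  imports Defs
begin

lemma lmul_wd: "lmul g (wd w) = wd (g # w)"
  by (rule ext, simp add: lmul_def wd_def split: list.split)

lemma rmul_wd: "rmul (wd w) g = wd (w @ [g])"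
proof (rule ext)
  fix x show "rmul (wd w) g x = wd (w @ [g]) x"
    by (cases x rule: rev_cases) (auto simp: rmul_def wd_def)
qed

lemma lmul_padd: "lmul g (padd f h) = padd (lmul g f) (lmul g h)"
  by (rule ext, simp add: lmul_def padd_def split: list.split)
lemma lmul_psub: "lmul g (psub f h) = psub (lmul g f) (lmul g h)"
  by (rule ext, simp add: lmul_def psub_def split: list.split)
lemma lmul_psmult: "lmul g (psmult a f) = psmult a (lmul g f)"
  by (rule ext, simp add: lmul_def psmult_def split: list.split)
lemma rmul_padd: "rmul (padd f h) g = padd (rmul f g) (rmul h g)"
  by (rule ext, simp add: rmul_def padd_def)
lemma rmul_psub: "rmul (psub f h) g = psub (rmul f g) (rmul h g)"
  by (rule ext, simp add: rmul_def psub_def)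

fun lmulw :: "word \<Rightarrow> elem \<Rightarrow> elem" where
  "lmulw [] f = f" | "lmulw (g # u) f = lmul g (lmulw u f)"
fun rmulw :: "elem \<Rightarrow> word \<Rightarrow> elem" where
  "rmulw f [] = f" | "rmulw f (g # v) = rmulw (rmul f g) v"

lemma lmulw_wd: "lmulw u (wd w) = wd (u @ w)"
  by (induction u) (auto simp: lmul_wd)
lemma rmulw_wd: "rmulw (wd w) v = wd (w @ v)"
  by (induction v arbitrary: w) (auto simp: rmul_wd)
lemma lmulw_padd: "lmulw u (padd f h) = padd (lmulw u f) (lmulw u h)"
  by (induction u) (auto simp: lmul_padd)
lemma lmulw_psub: "lmulw u (psub f h) = psub (lmulw u f) (lmulw u h)"
  by (induction u) (auto simp: lmul_psub)
lemma rmulw_padd: "rmulw (padd f h) v = padd (rmulw f v) (rmulw h v)"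
  by (induction v arbitrary: f h) (auto simp: rmul_padd)
lemma rmulw_psub: "rmulw (psub f h) v = psub (rmulw f v) (rmulw h v)"
  by (induction v arbitrary: f h) (auto simp: rmul_psub)

lemma hcl_lmulw: "list_all (valid_gen n) u \<Longrightarrow> f \<in> hcl_ideal n \<Longrightarrow> lmulw u f \<in> hcl_ideal n"
  by (induction u) (auto intro: hcl_ideal.lmul)
lemma hcl_rmulw: "list_all (valid_gen n) v \<Longrightarrow> f \<in> hcl_ideal n \<Longrightarrow> rmulw f v \<in> hcl_ideal n"
  by (induction v arbitrary: f) (auto intro: hcl_ideal.rmul)
lemma M_lmulw: "list_all (valid_gen n) u \<Longrightarrow> f \<in> M_kernel n I \<Longrightarrow> lmulw u f \<in> M_kernel n I"
  by (induction u) (auto intro: M_kernel.lmul)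

lemma hcl_ctx:
  assumes "r \<in> hcl_relators n" "list_all (valid_gen n) u" "list_all (valid_gen n) v"
  shows "lmulw u (rmulw r v) \<in> hcl_ideal n"
  using assms by (intro hcl_lmulw hcl_rmulw hcl_ideal.rel)

lemma M_lin:
  assumes "f \<in> M_kernel n I" "g \<in> M_kernel n I"
  shows "(\<lambda>w. a * f w + b * g w) \<in> M_kernel n I"
proof -
  have "(\<lambda>w. a * f w + b * g w) = padd (psmult a f) (psmult b g)"
    by (simp add: padd_def psmult_def)
  thus ?thesis using assms by (simp add: M_kernel.add M_kernel.smult)
qed

lemma M_zero: "(\<lambda>_. 0) \<in> M_kernel n I"
  by (simp add: M_kernel.ideal hcl_ideal.zero)

lemma hcl_lin:
  assumes "f \<in> hcl_ideal n" "g \<in> hcl_ideal n"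
  shows "(\<lambda>w. a * f w + b * g w) \<in> hcl_ideal n"
proof -
  have "(\<lambda>w. a * f w + b * g w) = padd (psmult a f) (psmult b g)"
    by (simp add: padd_def psmult_def)
  thus ?thesis using assms by (simp add: hcl_ideal.add hcl_ideal.smult)
qed

lemma M_eqI: "f \<in> M_kernel n I \<Longrightarrow> f = g \<Longrightarrow> g \<in> M_kernel n I" by simp

definition vw where "vw n u = list_all (valid_gen n) u"

lemma K_comm:
  assumes "1 \<le> i" "i < n" "1 \<le> j" "j \<le> n" "j \<noteq> i" "j \<noteq> i + 1"
    "list_all (valid_gen n) u" "list_all (valid_gen n) v"
  shows "(\<lambda>x. wd (u @ T i # C j # v) x - wd (u @ C j # T i # v) x) \<in> hcl_ideal n"
proof -
  have "psub (wd [T i, C j]) (wd [C j, T i]) \<in> hcl_relators n" using assms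
    unfolding hcl_relators_def by blast
  from hcl_ctx[OF this assms(7,8)] show ?thesis
    unfolding rmulw_psub lmulw_psub rmulw_wd lmulw_wd by (simp add: psub_def)
qed

lemma K_TCi:
  assumes "1 \<le> i" "i < n" "list_all (valid_gen n) u" "list_all (valid_gen n) v"
  shows "(\<lambda>x. wd (u @ T i # C i # v) x - wd (u @ C (i+1) # T i # v) x) \<in> hcl_ideal n"
proof -
  have "psub (wd [T i, C i]) (wd [C (i+1), T i]) \<in> hcl_relators n" using assms
    unfolding hcl_relators_def by blast
  from hcl_ctx[OF this assms(3,4)] show ?thesis
    unfolding rmulw_psub lmulw_psub rmulw_wd lmulw_wd by (simp add: psub_def)
qed

lemma K_TCi1:
  assumes "1 \<le> i" "i < n" "list_all (valid_gen n) u" "list_all (valid_gen n) v"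
  shows "(\<lambda>x. wd (u @ T i # C (i+1) # v) x + wd (u @ C (i+1) # v) x
             - wd (u @ C i # T i # v) x - wd (u @ C i # v) x) \<in> hcl_ideal n"
proof -
  have "psub (padd (wd [T i, C (i+1)]) (wd [C (i+1)])) (padd (wd [C i, T i]) (wd [C i])) \<in> hcl_relators n" using assms
    unfolding hcl_relators_def by blast
  from hcl_ctx[OF this assms(3,4)] show ?thesis
    unfolding rmulw_psub lmulw_psub rmulw_padd lmulw_padd rmulw_wd lmulw_wd by (simp add: psub_def padd_def diff_diff_eq)
qed

lemma K_CC:
  assumes "1 \<le> i" "i \<le> n" "1 \<le> j" "j \<le> n" "i \<noteq> j" "list_all (valid_gen n) u" "list_all (valid_gen n) v"
  shows "(\<lambda>x. wd (u @ C i # C j # v) x + wd (u @ C j # C i # v) x) \<in> hcl_ideal n"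
proof -
  have "padd (wd [C i, C j]) (wd [C j, C i]) \<in> hcl_relators n" using assms
    unfolding hcl_relators_def by blast
  from hcl_ctx[OF this assms(6,7)] show ?thesis
    unfolding rmulw_padd lmulw_padd rmulw_wd lmulw_wd by (simp add: padd_def)
qed

lemma K_CCsq:
  assumes "1 \<le> i" "i \<le> n" "list_all (valid_gen n) u" "list_all (valid_gen n) v"
  shows "(\<lambda>x. wd (u @ C i # C i # v) x + wd (u @ v) x) \<in> hcl_ideal n"
proof -
  have "padd (wd [C i, C i]) (wd []) \<in> hcl_relators n" using assms
    unfolding hcl_relators_def by blast
  from hcl_ctx[OF this assms(3,4)] show ?thesis
    unfolding rmulw_padd lmulw_padd rmulw_wd lmulw_wd by (simp add: padd_def)
qed

lemma S_nodes:
  assumes "1 \<le> i" "i < n" "i \<notin> des I" "list_all (valid_gen n) u"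
  shows "wd (u @ [T i]) \<in> M_kernel n I"
proof -
  have "wd [T i] \<in> S_relators n I" using assms unfolding S_relators_def by auto
  from M_lmulw[OF assms(4) M_kernel.srel[OF this]] show ?thesis by (simp add: lmulw_wd)
qed

lemma S_des:
  assumes "1 \<le> i" "i < n" "i \<in> des I" "list_all (valid_gen n) u"
  shows "(\<lambda>x. wd (u @ [T i]) x + wd u x) \<in> M_kernel n I"
proof -
  have "padd (wd [T i]) (wd []) \<in> S_relators n I" using assms unfolding S_relators_def by auto
  from M_lmulw[OF assms(4) M_kernel.srel[OF this]] show ?thesis
    unfolding lmulw_padd lmulw_wd by (simp add: padd_def)
qed

lemma K_commw:
  assumes "1 \<le> i" "i < n" "\<forall>j\<in>set xs. 1 \<le> j \<and> j \<le> n \<and> j \<noteq> i \<and> j \<noteq> i + 1"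
    "list_all (valid_gen n) u" "list_all (valid_gen n) v"
  shows "(\<lambda>x. wd (u @ T i # map C xs @ v) x - wd (u @ map C xs @ T i # v) x) \<in> hcl_ideal n"
  using assms(3,4)
proof (induction xs arbitrary: u)
  case Nil
  then show ?case using hcl_ideal.zero[of n] by simp
next
  case (Cons j xs)
  have vu: "list_all (valid_gen n) (u @ [C j])" using Cons.prems by (auto simp: valid_gen_def[of n "C j"])
  have vm: "list_all (valid_gen n) (map C xs @ v)" using Cons.prems assms(5) by (auto simp: valid_gen_def list_all_iff)
  have a: "(\<lambda>x. wd (u @ T i # C j # (map C xs @ v)) x - wd (u @ C j # T i # (map C xs @ v)) x) \<in> hcl_ideal n"
    using Cons.prems assms(1,2,5) vm by (intro K_comm) auto
  have b: "(\<lambda>x. wd ((u @ [C j]) @ T i # map C xs @ v) x - wd ((u @ [C j]) @ map C xs @ T i # v) x) \<in> hcl_ideal n"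
    using Cons.IH[OF _ vu] Cons.prems by auto
  from hcl_lin[OF a b, of 1 1] show ?case by simp
qed


lemma M_add: "f \<in> M_kernel n I \<Longrightarrow> g \<in> M_kernel n I \<Longrightarrow> (\<lambda>x. f x + g x) \<in> M_kernel n I"
  using M_lin[of f n I g 1 1] by simp
lemma M_sub: "f \<in> M_kernel n I \<Longrightarrow> g \<in> M_kernel n I \<Longrightarrow> (\<lambda>x. f x - g x) \<in> M_kernel n I"
  using M_lin[of f n I g 1 "-1"] by simp
lemma H: "f \<in> hcl_ideal n \<Longrightarrow> f \<in> M_kernel n I" by (rule M_kernel.ideal)

lemma vC: "\<forall>j\<in>set p. 1 \<le> j \<and> j \<le> n \<and> Q j \<Longrightarrow> list_all (valid_gen n) (map C p)"
  by (simp add: list_all_iff valid_gen_def)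

locale setting =
  fixes n i :: nat and I :: "nat list" and p q :: "nat list"
  assumes i1: "1 \<le> i" and i2: "i < n"
    and hp: "\<forall>j\<in>set p. 1 \<le> j \<and> j \<le> n \<and> j \<noteq> i \<and> j \<noteq> i + 1"
    and hq: "\<forall>j\<in>set q. 1 \<le> j \<and> j \<le> n \<and> j \<noteq> i \<and> j \<noteq> i + 1"
begin

lemma vP: "list_all (valid_gen n) (map C p)" using hp by (auto simp: list_all_iff valid_gen_def)
lemma vQ: "list_all (valid_gen n) (map C q)" using hq by (auto simp: list_all_iff valid_gen_def)
lemma vg: "valid_gen n (C i)" "valid_gen n (C (Suc i))" "valid_gen n (T i)"
  using i1 i2 by (auto simp: valid_gen_def)

lemma k0: "(\<lambda>x. wd (T i # map C p @ v) x - wd (map C p @ T i # v) x) \<in> M_kernel n I"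
  if "list_all (valid_gen n) v"
  using K_commw[OF i1 i2 hp, of "[]" v] that by (auto intro: H)

lemma kQ: "(\<lambda>x. wd (u @ T i # map C q) x - wd (u @ map C q @ [T i]) x) \<in> M_kernel n I"
  if "list_all (valid_gen n) u"
  using K_commw[OF i1 i2 hq that, of "[]"] by (auto intro: H)

lemma L00: "(\<lambda>x. wd (T i # map C p @ map C q) x - (if i \<in> des I then -1 else 0) * wd (map C p @ map C q) x) \<in> M_kernel n I"
proof (cases "i \<in> des I")
  case True
  have c: "(\<lambda>x. wd (T i # map C p @ map C q) x - wd (map C p @ T i # map C q) x
     + (wd (map C p @ T i # map C q) x - wd (map C p @ map C q @ [T i]) x)
     + (wd ((map C p @ map C q) @ [T i]) x + wd (map C p @ map C q) x)) \<in> M_kernel n I"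
    by (intro M_add k0 kQ S_des i1 i2 True) (simp_all add: vP vQ)
  show ?thesis by (rule M_eqI[OF c]) (rule ext, simp add: True algebra_simps)
next
  case False
  have c: "(\<lambda>x. wd (T i # map C p @ map C q) x - wd (map C p @ T i # map C q) x
     + (wd (map C p @ T i # map C q) x - wd (map C p @ map C q @ [T i]) x)
     + (wd ((map C p @ map C q) @ [T i]) x)) \<in> M_kernel n I"
    by (intro M_add k0 kQ S_nodes i1 i2 False) (simp_all add: vP vQ)
  show ?thesis by (rule M_eqI[OF c]) (rule ext, simp add: False algebra_simps)
qed


lemma ii: "1 \<le> i + 1" "i + 1 \<le> n" "i \<le> n" "i \<noteq> i + 1" using i1 i2 by auto

lemma L10: "(\<lambda>x. wd (T i # map C p @ C i # map C q) x - 0 * wd (map C p @ C i # map C q) x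
   - (if i \<in> des I then -1 else 0) * wd (map C p @ C (i+1) # map C q) x) \<in> M_kernel n I"
proof -
  have v1: "list_all (valid_gen n) (C i # map C q)" by (simp add: vQ vg)
  have v2: "list_all (valid_gen n) (map C p @ [C (i+1)])" by (simp add: vP vg)
  have v3: "list_all (valid_gen n) (map C p @ C (i+1) # map C q)" by (simp add: vP vQ vg)
  note a = M_add[OF M_add[OF k0[OF v1] H[OF K_TCi[OF i1 i2 vP vQ]]] kQ[OF v2]]
  show ?thesis
  proof (cases "i \<in> des I")
    case True
    show ?thesis by (rule M_eqI[OF M_add[OF a S_des[OF i1 i2 True v3]]]) (rule ext, simp add: True algebra_simps)
  next
    case False
    show ?thesis by (rule M_eqI[OF M_add[OF a S_nodes[OF i1 i2 False v3]]]) (rule ext, simp add: False algebra_simps)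
  qed
qed

lemma L01: "(\<lambda>x. wd (T i # map C p @ C (i+1) # map C q) x - (-1) * wd (map C p @ C (i+1) # map C q) x
   - (if i \<in> des I then 0 else 1) * wd (map C p @ C i # map C q) x) \<in> M_kernel n I"
proof -
  have v1: "list_all (valid_gen n) (C (i+1) # map C q)" by (simp add: vQ vg)
  have v2: "list_all (valid_gen n) (map C p @ [C i])" by (simp add: vP vg)
  have v3: "list_all (valid_gen n) (map C p @ C i # map C q)" by (simp add: vP vQ vg)
  note a = M_add[OF M_add[OF k0[OF v1] H[OF K_TCi1[OF i1 i2 vP vQ]]] kQ[OF v2]]
  show ?thesis
  proof (cases "i \<in> des I")
    case True
    show ?thesis by (rule M_eqI[OF M_add[OF a S_des[OF i1 i2 True v3]]]) (rule ext, simp add: True algebra_simps)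
  next
    case False
    show ?thesis by (rule M_eqI[OF M_add[OF a S_nodes[OF i1 i2 False v3]]]) (rule ext, simp add: False algebra_simps)
  qed
qed

lemma L11: "(\<lambda>x. wd (T i # map C p @ C i # C (i+1) # map C q) x
   - (if i \<in> des I then 0 else -1) * wd (map C p @ C i # C (i+1) # map C q) x
   - 1 * wd (map C p @ map C q) x) \<in> M_kernel n I"
proof -
  have v1: "list_all (valid_gen n) (C i # C (i+1) # map C q)" by (simp add: vQ vg)
  have v2: "list_all (valid_gen n) (C (i+1) # map C q)" by (simp add: vQ vg)
  have v3: "list_all (valid_gen n) (map C p @ [C (i+1)])" by (simp add: vP vg)
  have v4: "list_all (valid_gen n) (T i # map C q)" by (simp add: vQ vg)
  have v5: "list_all (valid_gen n) (map C p @ [C i, C (i+1)])" by (simp add: vP vg)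
  have v6: "list_all (valid_gen n) (map C p @ C i # C (i+1) # map C q)" by (simp add: vP vQ vg)
  note a = M_add[OF M_add[OF M_sub[OF M_add[OF M_add[OF k0[OF v1] H[OF K_TCi[OF i1 i2 vP v2]]]
       H[OF K_TCi1[OF i1 i2 v3 vQ]]] H[OF K_CCsq[OF ii(1,2) vP vQ]]]
       H[OF K_CC[OF i1 ii(3) ii(1,2,4) vP v4]]] H[OF K_CC[OF i1 ii(3) ii(1,2,4) vP vQ]]]
  note b = M_sub[OF a kQ[OF v5]]
  show ?thesis
  proof (cases "i \<in> des I")
    case True
    show ?thesis by (rule M_eqI[OF M_sub[OF b S_des[OF i1 i2 True v6]]]) (rule ext, simp add: True algebra_simps)
  next
    case False
    show ?thesis by (rule M_eqI[OF M_sub[OF b S_nodes[OF i1 i2 False v6]]]) (rule ext, simp add: False algebra_simps)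
  qed
qed

end

lemma sl_append:
  fixes A B :: "nat set"
  assumes "finite A" "finite B" "\<forall>a\<in>A. \<forall>b\<in>B. a < b"
  shows "sorted_list_of_set (A \<union> B) = sorted_list_of_set A @ sorted_list_of_set B"
proof -
  have "A \<union> B = set (sorted_list_of_set A @ sorted_list_of_set B)" using assms by simp
  moreover have "sorted (sorted_list_of_set A @ sorted_list_of_set B)"
    using assms by (auto simp: sorted_append less_imp_le)
  moreover have "distinct (sorted_list_of_set A @ sorted_list_of_set B)"
    using assms by auto
  ultimately show ?thesis by (metis sorted_list_of_set.idem_if_sorted_distinct)
qed

lemma sl_pair: "sorted_list_of_set {i::nat, Suc i} = [i, Suc i]"
  by (metis sorted_list_of_set.idem_if_sorted_distinct list.set distinct_length_2_or_more distinct_singleton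
       sorted2 sorted1 lessI less_imp_le empty_set set_simps(2) n_not_Suc_n)

lemma sl_single: "sorted_list_of_set {x::nat} = [x]"
  by (metis sorted_list_of_set.idem_if_sorted_distinct distinct_singleton sorted1 empty_set set_simps(2))

lemma cword_split:
  assumes "finite D"
  shows "cword D = map C (sorted_list_of_set {x\<in>D. x < i}) @ map C (sorted_list_of_set (D \<inter> {i, Suc i}))
     @ map C (sorted_list_of_set {x\<in>D. Suc i < x})"
proof -
  have e: "D = {x\<in>D. x < i} \<union> ((D \<inter> {i, Suc i}) \<union> {x\<in>D. Suc i < x})" by auto
  have "sorted_list_of_set D = sorted_list_of_set {x\<in>D. x < i} @ sorted_list_of_set ((D \<inter> {i, Suc i}) \<union> {x\<in>D. Suc i < x})"
    by (subst e, rule sl_append) (use assms in auto)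
  also have "sorted_list_of_set ((D \<inter> {i, Suc i}) \<union> {x\<in>D. Suc i < x}) = sorted_list_of_set (D \<inter> {i, Suc i}) @ sorted_list_of_set {x\<in>D. Suc i < x}"
    by (rule sl_append) (use assms in auto)
  finally show ?thesis by (simp add: cword_def)
qed

lemma final:
  assumes "(\<lambda>x. wd (T i # cword D) x - a * wd (cword D) x - b * wd (cword E) x) \<in> M_kernel n I"
    "finite S" "b = 0 \<or> E \<in> S"
  shows "\<exists>\<beta>. M_eq n I (lmul (T i) (wd (cword D))) (padd (psmult a (wd (cword D))) (\<lambda>w. \<Sum>D'\<in>S. \<beta> D' * wd (cword D') w))"
proof (intro exI)
  let ?\<beta> = "\<lambda>X. if X = E then b else 0"
  have s: "(\<lambda>w. \<Sum>D'\<in>S. ?\<beta> D' * wd (cword D') w) = (\<lambda>w. b * wd (cword E) w)"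
  proof (rule ext)
    fix w
    have "(\<Sum>D'\<in>S. ?\<beta> D' * wd (cword D') w) = (\<Sum>D'\<in>S. if D' = E then b * wd (cword E) w else 0)"
      by (rule sum.cong) auto
    also have "\<dots> = b * wd (cword E) w" using assms(2,3) by (auto simp: sum.delta')
    finally show "(\<Sum>D'\<in>S. ?\<beta> D' * wd (cword D') w) = b * wd (cword E) w" .
  qed
  show "M_eq n I (lmul (T i) (wd (cword D))) (padd (psmult a (wd (cword D))) (\<lambda>w. \<Sum>D'\<in>S. ?\<beta> D' * wd (cword D') w))"
    unfolding M_eq_def s lmul_wd by (rule M_eqI[OF assms(1)]) (rule ext, simp add: psub_def padd_def psmult_def)
qed


lemma lt_cov: "cov n I D0 D \<Longrightarrow> D0 \<noteq> D \<Longrightarrow> lt_I n I D0 D"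
  unfolding lt_I_def le_I_def by auto

theorem mainTheorem7:
  fixes n i :: nat and I :: "nat list" and D :: "nat set"
  assumes "is_composition I n" and "1 \<le> i" and "i \<le> n - 1" and "D \<subseteq> {1..n}"
  shows "\<exists>\<beta> :: nat set \<Rightarrow> complex.
           M_eq n I (lmul (T i) (wd (cword D)))
             (padd (psmult (alpha i I D) (wd (cword D)))
                   (\<lambda>w. \<Sum>D'\<in>{D'. D' \<subseteq> {1..n} \<and> lt_I n I D' D}. \<beta> D' * wd (cword D') w))"
proof -
  let ?S = "{D'. D' \<subseteq> {1..n} \<and> lt_I n I D' D}"
  have fS: "finite ?S" by (rule finite_subset[of _ "Pow {1..n}"]) auto
  have fD: "finite D" using assms(4) finite_subset by blast
  have i2: "i < n" "Suc i \<le> n" using assms(2,3) by auto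
  define A where "A = {x\<in>D. x < i}"
  define B where "B = {x\<in>D. Suc i < x}"
  define p where "p = sorted_list_of_set A"
  define q where "q = sorted_list_of_set B"
  have fA: "finite A" "finite B" using fD by (auto simp: A_def B_def)
  interpret setting n i I p q
    by standard (use assms(2,4) i2 fA in \<open>auto simp: p_def q_def A_def B_def\<close>)
  have cw: "\<And>E. finite E \<Longrightarrow> {x\<in>E. x < i} = A \<Longrightarrow> {x\<in>E. Suc i < x} = B \<Longrightarrow>
      cword E = map C p @ map C (sorted_list_of_set (E \<inter> {i, Suc i})) @ map C q"
    using cword_split unfolding p_def q_def by metis
  show ?thesis
  proof (cases "i \<in> D")
    case iD: True
    show ?thesis
    proof (cases "Suc i \<in> D")
      case sD: True
      define D0 where "D0 = D - {i, Suc i}"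
      have "D \<inter> {i, Suc i} = {i, Suc i}" using iD sD by auto
      hence c1: "cword D = map C p @ C i # C (Suc i) # map C q"
        using cw[OF fD] by (simp add: A_def B_def sl_pair)
      have "D0 \<inter> {i, Suc i} = {}" by (auto simp: D0_def)
      moreover have a1: "{x\<in>D0. x < i} = A" "{x\<in>D0. Suc i < x} = B" by (auto simp: A_def B_def D0_def)
      ultimately have c2: "cword D0 = map C p @ map C q"
        using cw[OF _ a1] fD by (simp add: D0_def sl_single)
      have mem: "True \<Longrightarrow> D0 \<in> ?S" (is "?P \<Longrightarrow> _")
        proof -
        assume hP: ?P
        have "cov n I D0 D" unfolding cov_def D0_def using iD sD i2 assms(2) hP by (intro exI[of _ i]) auto
        thus ?thesis using assms(2,4) iD sD i2 by (auto simp: D0_def intro!: lt_cov)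
      qed
      have al: "alpha i I D = (if i \<in> des I then 0 else -1)" using iD sD by (simp add: alpha_def)
      show ?thesis
        by (rule final[where b=1 and E=D0, OF _ fS]) (use L11 mem in \<open>simp_all add: c1 c2 al\<close>)
    next
      case sD: False
      define D0 where "D0 = insert (Suc i) (D - {i})"
      have "D \<inter> {i, Suc i} = {i}" using iD sD by auto
      hence c1: "cword D = map C p @ C i # map C q"
        using cw[OF fD] by (simp add: A_def B_def sl_single)
      have "D0 \<inter> {i, Suc i} = {Suc i}" by (auto simp: D0_def)
      moreover have a1: "{x\<in>D0. x < i} = A" "{x\<in>D0. Suc i < x} = B" by (auto simp: A_def B_def D0_def)
      ultimately have c2: "cword D0 = map C p @ C (Suc i) # map C q"
        using cw[OF _ a1] fD by (simp add: D0_def sl_single)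
      have mem: "i \<in> des I \<Longrightarrow> D0 \<in> ?S" (is "?P \<Longrightarrow> _")
        proof -
        assume hP: ?P
        have "cov n I D0 D" unfolding cov_def D0_def using iD sD i2 assms(2) hP by (intro exI[of _ i]) auto
        thus ?thesis using assms(2,4) iD sD i2 by (auto simp: D0_def intro!: lt_cov)
      qed
      have al: "alpha i I D = 0" using iD sD by (simp add: alpha_def)
      show ?thesis
        by (rule final[where b="if i \<in> des I then -1 else 0" and E=D0, OF _ fS]) (use L10 mem in \<open>simp_all add: c1 c2 al\<close>)
    qed
  next
    case iD: False
    show ?thesis
    proof (cases "Suc i \<in> D")
      case sD: True
      define D0 where "D0 = insert i (D - {Suc i})"
      have "D \<inter> {i, Suc i} = {Suc i}" using iD sD by auto
      hence c1: "cword D = map C p @ C (Suc i) # map C q"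
        using cw[OF fD] by (simp add: A_def B_def sl_single)
      have "D0 \<inter> {i, Suc i} = {i}" by (auto simp: D0_def)
      moreover have a1: "{x\<in>D0. x < i} = A" "{x\<in>D0. Suc i < x} = B" by (auto simp: A_def B_def D0_def)
      ultimately have c2: "cword D0 = map C p @ C i # map C q"
        using cw[OF _ a1] fD by (simp add: D0_def sl_single)
      have mem: "i \<notin> des I \<Longrightarrow> D0 \<in> ?S" (is "?P \<Longrightarrow> _")
        proof -
        assume hP: ?P
        have "cov n I D0 D" unfolding cov_def D0_def using iD sD i2 assms(2) hP by (intro exI[of _ i]) auto
        thus ?thesis using assms(2,4) iD sD i2 by (auto simp: D0_def intro!: lt_cov)
      qed
      have al: "alpha i I D = -1" using iD sD by (simp add: alpha_def)
      show ?thesis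
        by (rule final[where b="if i \<in> des I then 0 else 1" and E=D0, OF _ fS]) (use L01 mem in \<open>simp_all add: c1 c2 al\<close>)
    next
      case sD: False
      have "D \<inter> {i, Suc i} = {}" using iD sD by auto
      hence c1: "cword D = map C p @ map C q"
        using cw[OF fD] by (simp add: A_def B_def)
      have al: "alpha i I D = (if i \<in> des I then -1 else 0)" using iD sD by (simp add: alpha_def)
      show ?thesis
        by (rule final[where b=0 and E=D, OF _ fS]) (use L00 in \<open>simp_all add: c1 al\<close>)
    qed
  qed
qed


end
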